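(* Let $\alpha,\beta$ be compositions with $\beta\subseteq\alpha$, and suppose $\alpha/\beta$ is the disjoint sum of nonempty skew shapes $\alpha^1/\beta^1,\ldots,\alpha^k/\beta^k$, where no two of these components share a row or a column, and $\alpha^i/\beta^i$ lies strictly above $\alpha^{i+1}/\beta^{i+1}$ for $1\le i\le k-1$. Let $n_i=|\alpha^i/\beta^i|$. If for each $i$ the poset $\mathrm{SET}(\alpha^i/\beta^i)$ has a unique minimal element $M_i$, then $\mathrm{SET}(\alpha/\beta)$ has a unique minimal element, namely the tableau whose restriction to the component $\alpha^i/\beta^i$ is obtained from $M_i$ by replacing each entry $a$ with $a+n_1+\cdots+n_{i-1}$.
   Context: Diagrams of compositions have rows numbered from the bottom, row $i$ consisting of columns $1,\ldots,\alpha_i$; for $\beta\subseteq\alpha$ the skew diagram $\alpha/\beta$ consists of the cells in row $i$, column $j$ with $\beta_i<j\le\alpha_i$. $\alpha/\beta$ is a disjoint sum of nonempty sets of cells $A_1,\ldots,A_k$ (each itself a skew shape) if these partition the cells of $\alpha/\beta$ and, for $i\ne j$, the smallest interval containing the row indices of $A_i$ is disjoint from that of $A_j$, and likewise for column indices. $\mathrm{SET}$ of a skew shape with $m$ cells is the set of bijective fillings with $1,\ldots,m$ whose rows increase left to right and columns increase bottom to top. For $1\le i\le m-1$, $\pi_i(T)=T$ if $i+1$ is in a strictly higher row than $i$, $\pi_i(T)=s_i(T)$ (swap $i$ and $i+1$) if $i+1$ is in a strictly lower row than $i$, and $\pi_i(T)=0$ otherwise; the poset order is $T\le T'$ iff $T'$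 is obtained from $T$ by a sequence of operators $\pi_i$ (all intermediate results nonzero). A minimal element is one with no strictly smaller element in $\mathrm{SET}$. *)

theory Defs
  imports Main
begin

type_synonym cell = "nat \<times> nat"   \<comment> \<open>(row, column), rows numbered from 1 at the bottom\<close>

definition is_composition :: "nat list \<Rightarrow> bool" where
  "is_composition \<alpha> \<longleftrightarrow> (\<forall>x\<in>set \<alpha>. 0 < x)"

definition part :: "nat list \<Rightarrow> nat \<Rightarrow> nat" where
  "part \<alpha> r = (if 1 \<le> r \<and> r \<le> length \<alpha> then \<alpha> ! (r - 1) else 0)"

definition comp_contained :: "nat list \<Rightarrow> nat list \<Rightarrow> bool" where
  "comp_contained \<beta> \<alpha> \<longleftrightarrow> length \<beta> \<le> length \<alpha> \<and> (\<forall>r. part \<beta> r \<le> part \<alpha> r)"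

definition skew_diagram :: "nat list \<Rightarrow> nat list \<Rightarrow> cell set" where
  "skew_diagram \<alpha> \<beta> = {(r, j). 1 \<le> r \<and> r \<le> length \<alpha> \<and> part \<beta> r < j \<and> j \<le> part \<alpha> r}"

definition hull :: "nat set \<Rightarrow> nat set" where
  "hull S = {Min S..Max S}"

definition disjoint_sum :: "cell set \<Rightarrow> nat \<Rightarrow> (nat \<Rightarrow> cell set) \<Rightarrow> bool" where
  "disjoint_sum D k A \<longleftrightarrow>
     (\<Union>i\<in>{1..k}. A i) = D \<and>
     (\<forall>i\<in>{1..k}. A i \<noteq> {}) \<and>
     (\<forall>i\<in>{1..k}. \<forall>j\<in>{1..k}. i \<noteq> j \<longrightarrow>
        A i \<inter> A j = {} \<and>
        hull (fst ` A i) \<inter> hull (fst ` A j) = {} \<and>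
        hull (snd ` A i) \<inter> hull (snd ` A j) = {})"

definition SET :: "cell set \<Rightarrow> (cell \<Rightarrow> nat) set" where
  "SET D = {T. bij_betw T D {1..card D} \<and> (\<forall>c. c \<notin> D \<longrightarrow> T c = 0) \<and>
     (\<forall>r j j'. (r, j) \<in> D \<and> (r, j') \<in> D \<and> j < j' \<longrightarrow> T (r, j) < T (r, j')) \<and>
     (\<forall>r r' j. (r, j) \<in> D \<and> (r', j) \<in> D \<and> r < r' \<longrightarrow> T (r, j) < T (r', j))}"

definition row_of :: "cell set \<Rightarrow> (cell \<Rightarrow> nat) \<Rightarrow> nat \<Rightarrow> nat" where
  "row_of D T i = fst (THE c. c \<in> D \<and> T c = i)"

definition swap_entries :: "nat \<Rightarrow> (cell \<Rightarrow> nat) \<Rightarrow> cell \<Rightarrow> nat" where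
  "swap_entries i T = (\<lambda>c. if T c = i then i + 1 else if T c = i + 1 then i else T c)"

text \<open>The operator pi_i; None represents the result 0.\<close>
definition pi_op :: "cell set \<Rightarrow> nat \<Rightarrow> (cell \<Rightarrow> nat) \<Rightarrow> (cell \<Rightarrow> nat) option" where
  "pi_op D i T =
     (if row_of D T (i + 1) > row_of D T i then Some T
      else if row_of D T (i + 1) < row_of D T i then Some (swap_entries i T)
      else None)"

definition pi_step :: "cell set \<Rightarrow> (cell \<Rightarrow> nat) \<Rightarrow> (cell \<Rightarrow> nat) \<Rightarrow> bool" where
  "pi_step D T T' \<longleftrightarrow> T \<in> SET D \<and> (\<exists>i. 1 \<le> i \<and> i < card D \<and> pi_op D i T = Some T')"

definition set_le :: "cell set \<Rightarrow> (cell \<Rightarrow> nat) \<Rightarrow> (cell \<Rightarrow> nat) \<Rightarrow> bool" where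
  "set_le D T T' \<longleftrightarrow> T \<in> SET D \<and> (pi_step D)\<^sup>*\<^sup>* T T'"

definition minimal_elements :: "cell set \<Rightarrow> (cell \<Rightarrow> nat) set" where
  "minimal_elements D = {T \<in> SET D. \<not> (\<exists>T'\<in>SET D. set_le D T' T \<and> T' \<noteq> T)}"

end

theory Submission
  imports Defs
begin


lemma SET_bij: "T \<in> SET E \<Longrightarrow> bij_betw T E {1..card E}"
  unfolding SET_def by simp

lemma SET_inj: "T \<in> SET E \<Longrightarrow> inj_on T E"
  using SET_bij bij_betw_imp_inj_on by blast

lemma SET_range: "T \<in> SET E \<Longrightarrow> c \<in> E \<Longrightarrow> T c \<in> {1..card E}"
  using SET_bij bij_betwE by blast

lemma SET_zero: "T \<in> SET E \<Longrightarrow> c \<notin> E \<Longrightarrow> T c = 0"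
  unfolding SET_def by (cases c) auto

lemma SET_surj: "T \<in> SET E \<Longrightarrow> v \<in> {1..card E} \<Longrightarrow> \<exists>c\<in>E. T c = v"
  using SET_bij[unfolded bij_betw_def] by (metis imageE)

lemma SET_row: "T \<in> SET E \<Longrightarrow> (r, j) \<in> E \<Longrightarrow> (r, j') \<in> E \<Longrightarrow> j < j' \<Longrightarrow> T (r, j) < T (r, j')"
  unfolding SET_def by blast

lemma SET_col: "T \<in> SET E \<Longrightarrow> (r, j) \<in> E \<Longrightarrow> (r', j) \<in> E \<Longrightarrow> r < r' \<Longrightarrow> T (r, j) < T (r', j)"
  unfolding SET_def by blast

lemma SET_fin: "T \<in> SET E \<Longrightarrow> c \<in> E \<Longrightarrow> finite E"
  using SET_range[of T E c] by (metis atLeastAtMost_iff card.infinite le_zero_eq not_one_le_zero)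

lemma bij_by_card:
  assumes "finite E" "inj_on f E" "f ` E \<subseteq> {1..card E}"
  shows "bij_betw f E {1..card E}"
proof -
  have "card (f ` E) = card {1..card E}" using assms card_image by simp
  then have "f ` E = {1..card E}" using assms card_subset_eq by blast
  then show ?thesis using assms unfolding bij_betw_def by simp
qed

lemma SETI:
  assumes "finite E" "inj_on T E" "\<And>c. c \<in> E \<Longrightarrow> T c \<in> {1..card E}"
    "\<And>c. c \<notin> E \<Longrightarrow> T c = 0"
    "\<And>r j j'. (r, j) \<in> E \<Longrightarrow> (r, j') \<in> E \<Longrightarrow> j < j' \<Longrightarrow> T (r, j) < T (r, j')"
    "\<And>r r' j. (r, j) \<in> E \<Longrightarrow> (r', j) \<in> E \<Longrightarrow> r < r' \<Longrightarrow> T (r, j) < T (r', j)"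
  shows "T \<in> SET E"
proof -
  have "bij_betw T E {1..card E}" using assms(1,2,3) by (intro bij_by_card) auto
  then show ?thesis unfolding SET_def using assms by blast
qed

lemma swap_inv: "swap_entries v (swap_entries v S) = S"
  unfolding swap_entries_def by (rule ext) auto

lemma swap_less: "S p < S q \<Longrightarrow> \<not> (S p = v \<and> S q = Suc v) \<Longrightarrow> swap_entries v S p < swap_entries v S q"
  unfolding swap_entries_def by auto

lemma swap_eqD: "swap_entries v S x = swap_entries v S y \<Longrightarrow> S x = S y"
  unfolding swap_entries_def by (cases "S x = v"; cases "S x = Suc v"; cases "S y = v"; cases "S y = Suc v") simp_all

lemma swap_SET:
  assumes S: "S \<in> SET E" and c: "c \<in> E" "S c = v" and c': "c' \<in> E" "S c' = Suc v"
    and rows: "fst c \<noteq> fst c'" and cols: "snd c = snd c' \<Longrightarrow> fst c' < fst c"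
  shows "swap_entries v S \<in> SET E"
proof -
  have fin: "finite E" using SET_fin S c by blast
  have v1: "1 \<le> v" "Suc v \<le> card E" using SET_range[OF S c(1)] SET_range[OF S c'(1)] c c' by auto
  have inj: "inj_on S E" using SET_inj S .
  show ?thesis
  proof (rule SETI[OF fin])
    show "inj_on (swap_entries v S) E"
    proof (rule inj_onI)
      fix x y assume "x \<in> E" "y \<in> E" "swap_entries v S x = swap_entries v S y"
      then have "S x = S y" using swap_eqD by blast
      then show "x = y" using inj_onD[OF inj] \<open>x \<in> E\<close> \<open>y \<in> E\<close> by blast
    qed
  next
    fix x assume "x \<in> E"
    then have "S x \<in> {1..card E}" using SET_range[OF S] by blast
    then show "swap_entries v S x \<in> {1..card E}" using v1 unfolding swap_entries_def by auto
  next
    fix x assume "x \<notin> E"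
    then have "S x = 0" using SET_zero[OF S] by blast
    then show "swap_entries v S x = 0" using v1 unfolding swap_entries_def by auto
  next
    fix r j j' assume h: "(r, j) \<in> E" "(r, j') \<in> E" "j < j'"
    have "\<not> (S (r, j) = v \<and> S (r, j') = Suc v)"
    proof
      assume a: "S (r, j) = v \<and> S (r, j') = Suc v"
      then have "(r, j) = c" using inj_onD[OF inj, of "(r,j)" c] h c by simp
      moreover have "(r, j') = c'" using a inj_onD[OF inj, of "(r,j')" c'] h c' by simp
      ultimately show False using rows by auto
    qed
    then show "swap_entries v S (r, j) < swap_entries v S (r, j')"
      using swap_less SET_row[OF S h] by blast
  next
    fix r r' j assume h: "(r, j) \<in> E" "(r', j) \<in> E" "r < r'"
    have "\<not> (S (r, j) = v \<and> S (r', j) = Suc v)"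
    proof
      assume a: "S (r, j) = v \<and> S (r', j) = Suc v"
      then have "(r, j) = c" using inj_onD[OF inj, of "(r,j)" c] h c by simp
      moreover have "(r', j) = c'" using a inj_onD[OF inj, of "(r',j)" c'] h c' by simp
      ultimately show False using cols h by auto
    qed
    then show "swap_entries v S (r, j) < swap_entries v S (r', j)"
      using swap_less SET_col[OF S h] by blast
  qed
qed

lemma row_of_eq: "inj_on T E \<Longrightarrow> c \<in> E \<Longrightarrow> T c = w \<Longrightarrow> row_of E T w = fst c"
  unfolding row_of_def by (rule arg_cong[where f=fst], rule the_equality) (auto simp: inj_on_def)

lemma pi_step_SET:
  assumes "pi_step E S S'" shows "S' \<in> SET E"
proof -
  from assms have S: "S \<in> SET E" and "\<exists>i. 1 \<le> i \<and> i < card E \<and> pi_op E i S = Some S'"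
    unfolding pi_step_def by auto
  then obtain i where i: "1 \<le> i" "i < card E" "pi_op E i S = Some S'" by blast
  obtain c where c: "c \<in> E" "S c = i" using SET_surj[OF S, of i] i by auto
  obtain c' where c': "c' \<in> E" "S c' = Suc i" using SET_surj[OF S, of "Suc i"] i by auto
  have r: "row_of E S i = fst c" "row_of E S (Suc i) = fst c'"
    using row_of_eq[OF SET_inj[OF S]] c c' by auto
  show ?thesis
  proof (cases "fst c < fst c'")
    case True
    then show ?thesis using i r S unfolding pi_op_def by auto
  next
    case False
    then have lt: "fst c' < fst c" using i r unfolding pi_op_def by (auto split: if_splits)
    then have "S' = swap_entries i S" using i r unfolding pi_op_def by (auto split: if_splits)
    then show ?thesis using swap_SET[OF S c c'] lt by auto
  qed
qed

lemma last_step: "r\<^sup>*\<^sup>* x y \<Longrightarrow> x \<noteq> y \<Longrightarrow> \<exists>z. r z y \<and> z \<noteq> y"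
proof (induction rule: rtranclp_induct)
  case base then show ?case by simp
next
  case (step y z)
  then show ?case by (cases "y = z") auto
qed




locale sk =
  fixes D :: "cell set" and k :: nat and A :: "nat \<Rightarrow> cell set"
  assumes finD: "finite D" and ds: "disjoint_sum D k A"
    and ord: "\<forall>i. 1 \<le> i \<and> i < k \<longrightarrow> (\<forall>c\<in>A i. \<forall>c'\<in>A (Suc i). fst c' < fst c)"
begin

lemma D_eq: "D = (\<Union>i\<in>{1..k}. A i)" using ds unfolding disjoint_sum_def by (elim conjE) simp
lemma A_sub: "i \<in> {1..k} \<Longrightarrow> A i \<subseteq> D" using D_eq by blast
lemma finA: "i \<in> {1..k} \<Longrightarrow> finite (A i)" using A_sub finD by (meson finite_subset)
lemma A_ne: "i \<in> {1..k} \<Longrightarrow> A i \<noteq> {}" using ds unfolding disjoint_sum_def by blast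
lemma A_disj: "i \<in> {1..k} \<Longrightarrow> j \<in> {1..k} \<Longrightarrow> i \<noteq> j \<Longrightarrow> A i \<inter> A j = {}"
  using ds unfolding disjoint_sum_def by blast
lemma hull_disj: "i \<in> {1..k} \<Longrightarrow> j \<in> {1..k} \<Longrightarrow> i \<noteq> j \<Longrightarrow> hull (snd ` A i) \<inter> hull (snd ` A j) = {}"
  using ds unfolding disjoint_sum_def by blast

lemma in_hull: "finite S \<Longrightarrow> x \<in> S \<Longrightarrow> x \<in> hull S"
  unfolding hull_def by (simp add: Min_le Max_ge)

lemma diff_col:
  assumes h: "a \<in> {1..k}" "b \<in> {1..k}" "a \<noteq> b" "c \<in> A a" "c' \<in> A b"
  shows "snd c \<noteq> snd c'"
proof
  assume e: "snd c = snd c'"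
  have "snd c \<in> hull (snd ` A a)" using in_hull[of "snd ` A a" "snd c"] finA[OF h(1)] h(4) by auto
  moreover have "snd c \<in> hull (snd ` A b)" using in_hull[of "snd ` A b" "snd c'"] finA[OF h(2)] h(5) e by auto
  moreover have "hull (snd ` A a) \<inter> hull (snd ` A b) = {}" using hull_disj h by blast
  ultimately show False by blast
qed

lemma below: "1 \<le> a \<Longrightarrow> a < b \<Longrightarrow> b \<le> k \<Longrightarrow> c \<in> A a \<Longrightarrow> c' \<in> A b \<Longrightarrow> fst c' < fst c"
proof (induction b arbitrary: c')
  case 0 then show ?case by simp
next
  case (Suc b)
  show ?case
  proof (cases "a = b")
    case True
    have "1 \<le> a \<and> a < k" using Suc.prems True by simp
    then show ?thesis using ord Suc.prems True by blast
  next
    case False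
    then have ab: "a < b" using Suc.prems by simp
    obtain d where d: "d \<in> A b" using A_ne[of b] Suc.prems ab by fastforce
    have "fst d < fst c" using Suc.IH[OF Suc.prems(1) ab _ Suc.prems(4) d] Suc.prems by simp
    moreover have "1 \<le> b \<and> b < k" using Suc.prems ab by simp
    then have "fst c' < fst d" using ord Suc.prems d by blast
    ultimately show ?thesis by simp
  qed
qed

lemma diff_row:
  assumes h: "a \<in> {1..k}" "b \<in> {1..k}" "a \<noteq> b" "c \<in> A a" "c' \<in> A b"
  shows "fst c \<noteq> fst c'"
proof (cases "a < b")
  case True then show ?thesis using below[of a b c c'] h by auto
next
  case False then have "b < a" using h by simp
  then show ?thesis using below[of b a c' c] h by auto
qed

definition comp :: "cell \<Rightarrow> nat" where "comp c = (THE i. i \<in> {1..k} \<and> c \<in> A i)"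

lemma comp_eq: "i \<in> {1..k} \<Longrightarrow> c \<in> A i \<Longrightarrow> comp c = i"
  unfolding comp_def by (rule the_equality) (use A_disj in blast)+

lemma comp_D: "c \<in> D \<Longrightarrow> comp c \<in> {1..k} \<and> c \<in> A (comp c)"
proof -
  assume "c \<in> D"
  then obtain i where "i \<in> {1..k}" "c \<in> A i" using D_eq by auto
  then show ?thesis using comp_eq by simp
qed

definition off :: "nat \<Rightarrow> nat" where "off i = (\<Sum>j\<in>{1..<i}. card (A j))"

lemma off_Suc: "1 \<le> i \<Longrightarrow> off (Suc i) = off i + card (A i)"
  unfolding off_def by (simp add: sum.atLeastLessThan_Suc)

lemma off_mono: "a \<le> b \<Longrightarrow> off a \<le> off b"
  unfolding off_def by (intro sum_mono2) auto

lemma off_lt: "1 \<le> a \<Longrightarrow> a < b \<Longrightarrow> off a + card (A a) \<le> off b"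
  using off_Suc[of a] off_mono[of "Suc a" b] by simp

lemma card_U: "i \<le> Suc k \<Longrightarrow> card (\<Union>j\<in>{1..<i}. A j) = off i"
  unfolding off_def by (rule card_UN_disjoint) (use finA A_disj in auto)

lemma card_D: "card D = off (Suc k)"
proof -
  have "{1..<Suc k} = {1..k}" by auto
  then show ?thesis using card_U[of "Suc k"] D_eq by simp
qed

lemma off_le_D: "i \<in> {1..k} \<Longrightarrow> off i + card (A i) \<le> card D"
  using off_Suc[of i] off_mono[of "Suc i" "Suc k"] card_D by simp

definition glue :: "(nat \<Rightarrow> cell \<Rightarrow> nat) \<Rightarrow> cell \<Rightarrow> nat" where
  "glue F = (\<lambda>c. if c \<in> D then F (comp c) c + off (comp c) else 0)"

definition res :: "nat \<Rightarrow> (cell \<Rightarrow> nat) \<Rightarrow> cell \<Rightarrow> nat" where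
  "res i T = (\<lambda>c. if c \<in> A i then T c - off i else 0)"

definition block :: "(cell \<Rightarrow> nat) \<Rightarrow> bool" where
  "block T \<longleftrightarrow> (\<forall>i\<in>{1..k}. T ` A i = {off i + 1 .. off i + card (A i)})"

lemma glue_A: assumes "i \<in> {1..k}" "c \<in> A i" shows "glue F c = F i c + off i"
proof -
  have "c \<in> D" using A_sub assms by blast
  then show ?thesis unfolding glue_def using comp_eq[OF assms] by simp
qed

lemma glue_cong: "(\<And>i. i \<in> {1..k} \<Longrightarrow> F i = G i) \<Longrightarrow> glue F = glue G"
  unfolding glue_def using comp_D by (intro ext) auto

lemma glue_SET:
  assumes F: "\<forall>i\<in>{1..k}. F i \<in> SET (A i)"
  shows "glue F \<in> SET D"
proof -
  have val: "glue F c \<in> {off i + 1 .. off i + card (A i)}" if "i \<in> {1..k}" "c \<in> A i" for i c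
    using glue_A[OF that] SET_range[of "F i" "A i" c] F that by auto
  show ?thesis
proof (rule SETI[OF finD])
  show "inj_on (glue F) D"
  proof (rule inj_onI)
    fix x y assume xy: "x \<in> D" "y \<in> D" "glue F x = glue F y"
    define a where "a = comp x"
    define b where "b = comp y"
    have a: "a \<in> {1..k}" "x \<in> A a" using comp_D xy a_def by auto
    have b: "b \<in> {1..k}" "y \<in> A b" using comp_D xy b_def by auto
    show "x = y"
    proof (cases a b rule: linorder_cases)
      case less
      then show ?thesis using val[OF a] val[OF b] off_lt[of a b] a xy by auto
    next
      case greater
      then show ?thesis using val[OF a] val[OF b] off_lt[of b a] b xy by auto
    next
      case equal
      then have "F a x = F a y" using glue_A a b xy by auto
      then show ?thesis using inj_onD[OF SET_inj[OF F[rule_format, OF a(1)]] _ a(2)] b(2) equal by blast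
    qed
  qed
next
  fix c assume "c \<in> D"
  then show "glue F c \<in> {1..card D}" using val[of "comp c" c] comp_D off_le_D[of "comp c"] by fastforce
next
  fix c assume "c \<notin> D" then show "glue F c = 0" unfolding glue_def by simp
next
  fix r j j' assume h: "(r, j) \<in> D" "(r, j') \<in> D" "j < j'"
  define a where "a = comp (r, j)"
  define b where "b = comp (r, j')"
  have a: "a \<in> {1..k}" "(r, j) \<in> A a" using comp_D h a_def by auto
  have b: "b \<in> {1..k}" "(r, j') \<in> A b" using comp_D h b_def by auto
  have "a = b" using diff_row[OF a(1) b(1) _ a(2) b(2)] by auto
  then show "glue F (r, j) < glue F (r, j')"
    using glue_A a b SET_row[of "F a" "A a" r j j'] F h by auto
next
  fix r r' j assume h: "(r, j) \<in> D" "(r', j) \<in> D" "r < r'"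
  define a where "a = comp (r, j)"
  define b where "b = comp (r', j)"
  have a: "a \<in> {1..k}" "(r, j) \<in> A a" using comp_D h a_def by auto
  have b: "b \<in> {1..k}" "(r', j) \<in> A b" using comp_D h b_def by auto
  have "a = b" using diff_col[OF a(1) b(1) _ a(2) b(2)] by auto
  then show "glue F (r, j) < glue F (r', j)"
    using glue_A a b SET_col[of "F a" "A a" r j r'] F h by auto
qed
qed

lemma res_glue:
  assumes F: "F i \<in> SET (A i)" and i: "i \<in> {1..k}"
  shows "res i (glue F) = F i"
  unfolding res_def using glue_A[OF i] SET_zero[OF F] by (intro ext) auto

lemma res_SET:
  assumes T: "T \<in> SET D" and b: "block T" and i: "i \<in> {1..k}"
  shows "res i T \<in> SET (A i)"
proof -
  have val: "T c \<in> {off i + 1 .. off i + card (A i)}" if "c \<in> A i" for c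
    using b i that unfolding block_def by blast
  have inj: "inj_on T D" using SET_inj[OF T] .
  show ?thesis
  proof (rule SETI[OF finA[OF i]])
    show "inj_on (res i T) (A i)"
    proof (rule inj_onI)
      fix x y assume xy: "x \<in> A i" "y \<in> A i" "res i T x = res i T y"
      then have "T x - off i = T y - off i" unfolding res_def by simp
      then have "T x = T y" using val[OF xy(1)] val[OF xy(2)] by auto
      then show "x = y" using inj_onD[OF inj] A_sub[OF i] xy by blast
    qed
  next
    fix c assume c: "c \<in> A i" then show "res i T c \<in> {1..card (A i)}" using val[OF c] unfolding res_def by auto
  next
    fix c assume "c \<notin> A i" then show "res i T c = 0" unfolding res_def by simp
  next
    fix r j j' assume h: "(r, j) \<in> A i" "(r, j') \<in> A i" "j < j'"
    have "T (r, j) < T (r, j')" using SET_row[OF T] h A_sub[OF i] by blast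
    then show "res i T (r, j) < res i T (r, j')" using val[OF h(1)] val[OF h(2)] h unfolding res_def by auto
  next
    fix r r' j assume h: "(r, j) \<in> A i" "(r', j) \<in> A i" "r < r'"
    have "T (r, j) < T (r', j)" using SET_col[OF T] h A_sub[OF i] by blast
    then show "res i T (r, j) < res i T (r', j)" using val[OF h(1)] val[OF h(2)] h unfolding res_def by auto
  qed
qed

lemma glue_res:
  assumes T: "T \<in> SET D" and b: "block T"
  shows "glue (\<lambda>i. res i T) = T"
proof (rule ext)
  fix c show "glue (\<lambda>i. res i T) c = T c"
  proof (cases "c \<in> D")
    case True
    then have a: "comp c \<in> {1..k}" "c \<in> A (comp c)" using comp_D by auto
    then have "T c \<in> {off (comp c) + 1 .. off (comp c) + card (A (comp c))}"
      using b unfolding block_def by blast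
    then show ?thesis using glue_A[OF a] a unfolding res_def by auto
  next
    case False then show ?thesis unfolding glue_def using SET_zero[OF T] by simp
  qed
qed


lemma downclosed:
  fixes S :: "nat set"
  assumes "S \<subseteq> {1..N}" "\<And>y u. y \<in> S \<Longrightarrow> 1 \<le> u \<Longrightarrow> u \<le> y \<Longrightarrow> u \<in> S"
  shows "S = {1..card S}"
proof (cases "S = {}")
  case True then show ?thesis by simp
next
  case False
  have fin: "finite S" using assms(1) finite_subset by blast
  define m where "m = Max S"
  have mS: "m \<in> S" using Max_in fin False m_def by blast
  have "S = {1..m}"
  proof
    show "S \<subseteq> {1..m}" using assms(1) Max_ge fin m_def by fastforce
    show "{1..m} \<subseteq> S" using assms(2) mS by auto
  qed
  then show ?thesis by simp
qed

lemma mono_comp: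
  assumes T: "T \<in> SET D"
    and nd: "\<And>c c'. c \<in> D \<Longrightarrow> c' \<in> D \<Longrightarrow> T c' = Suc (T c) \<Longrightarrow> comp c \<le> comp c'"
  shows "c \<in> D \<Longrightarrow> c' \<in> D \<Longrightarrow> T c' = T c + n \<Longrightarrow> comp c \<le> comp c'"
proof (induction n arbitrary: c)
  case 0
  then have "c = c'" using inj_onD[OF SET_inj[OF T], of c c'] by simp
  then show ?case by simp
next
  case (Suc n)
  have "T c' \<le> card D" using SET_range[OF T Suc.prems(2)] by simp
  then have "Suc (T c) \<in> {1..card D}" using Suc.prems by simp
  then obtain d where d: "d \<in> D" "T d = Suc (T c)" using SET_surj[OF T] by blast
  have "comp c \<le> comp d" using nd Suc.prems(1) d by blast
  moreover have "comp d \<le> comp c'" using Suc.IH[OF d(1) Suc.prems(2)] d Suc.prems(3) by simp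
  ultimately show ?case by simp
qed

lemma block_of_nodesc:
  assumes T: "T \<in> SET D"
    and nd: "\<And>c c'. c \<in> D \<Longrightarrow> c' \<in> D \<Longrightarrow> T c' = Suc (T c) \<Longrightarrow> comp c \<le> comp c'"
  shows "block T"
proof -
  have mono: "comp c \<le> comp c'" if "c \<in> D" "c' \<in> D" "T c \<le> T c'" for c c'
  proof -
    have e: "T c' = T c + (T c' - T c)" using that(3) by simp
    show ?thesis by (rule mono_comp[OF T nd that(1,2) e])
  qed
  define U where "U i = (\<Union>j\<in>{1..<i}. A j)" for i
  have UD: "U i \<subseteq> D" if "i \<le> Suc k" for i
  proof
    fix x assume "x \<in> U i"
    then obtain j where "j \<in> {1..<i}" "x \<in> A j" unfolding U_def by blast
    then show "x \<in> D" using A_sub[of j] that by auto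
  qed
  have TU: "T ` U i = {1..off i}" if i: "i \<le> Suc k" for i
  proof -
    have "T ` U i \<subseteq> {1..card D}" using SET_range[OF T] UD[OF i] by blast
    moreover have "\<And>y u. y \<in> T ` U i \<Longrightarrow> 1 \<le> u \<Longrightarrow> u \<le> y \<Longrightarrow> u \<in> T ` U i"
    proof -
      fix y u assume h: "y \<in> T ` U i" "1 \<le> u" "u \<le> y"
      then obtain c j where c: "c \<in> A j" "j \<in> {1..<i}" "y = T c" unfolding U_def by blast
      have cU: "c \<in> U i" using c unfolding U_def by blast
      have cD: "c \<in> D" using cU UD[OF i] by blast
      have "u \<in> {1..card D}" using SET_range[OF T cD] c h by auto
      then obtain d where d: "d \<in> D" "T d = u" using SET_surj[OF T] by blast
      have "comp d \<le> comp c" using mono[OF d(1) cD] d c h by simp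
      moreover have "comp c = j" using comp_eq[of j c] c i by auto
      ultimately have "comp d \<in> {1..<i}" using comp_D[OF d(1)] c by auto
      then have "d \<in> U i" using comp_D[OF d(1)] unfolding U_def by blast
      then show "u \<in> T ` U i" using d by blast
    qed
    ultimately have "T ` U i = {1..card (T ` U i)}" by (rule downclosed)
    moreover have "card (T ` U i) = off i"
      using card_image[OF inj_on_subset[OF SET_inj[OF T] UD[OF i]]] card_U[OF i] unfolding U_def by simp
    ultimately show ?thesis by simp
  qed
  show ?thesis unfolding block_def
  proof
    fix i assume i: "i \<in> {1..k}"
    have "{1..<Suc i} = insert i {1..<i}" using i by auto
    then have US: "U (Suc i) = U i \<union> A i" unfolding U_def by auto
    have "A i \<inter> U i = {}"
    proof -
      have "A i \<inter> A j = {}" if "j \<in> {1..<i}" for j using A_disj[of i j] i that by auto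
      then show ?thesis unfolding U_def by blast
    qed
    then have AU: "A i = U (Suc i) - U i" using US by blast
    have s1: "U (Suc i) - U i \<subseteq> D" "U i \<subseteq> D" using UD i by auto
    have "T ` A i = T ` U (Suc i) - T ` U i"
      unfolding AU by (rule inj_on_image_set_diff[OF SET_inj[OF T] s1])
    also have "\<dots> = {1..off (Suc i)} - {1..off i}" using TU i by simp
    also have "\<dots> = {off i + 1..off i + card (A i)}" using off_Suc[of i] i by auto
    finally show "T ` A i = {off i + 1..off i + card (A i)}" .
  qed
qed

lemma swap_glue:
  assumes F: "\<forall>j\<in>{1..k}. F j \<in> SET (A j)" and i: "i \<in> {1..k}" and w: "1 \<le> w" "w < card (A i)"
  shows "swap_entries (w + off i) (glue F) = glue (F(i := swap_entries w (F i)))"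
proof (rule ext)
  fix x show "swap_entries (w + off i) (glue F) x = glue (F(i := swap_entries w (F i))) x"
  proof (cases "x \<in> D")
    case False then show ?thesis unfolding glue_def swap_entries_def using w by simp
  next
    case True
    then obtain j where j: "j \<in> {1..k}" "x \<in> A j" using comp_D by blast
    show ?thesis
    proof (cases "j = i")
      case True
      have g1: "glue F x = F i x + off i" using glue_A[OF j] True by simp
      have g2: "glue (F(i := swap_entries w (F i))) x = swap_entries w (F i) x + off i"
        using glue_A[OF j, of "F(i := swap_entries w (F i))"] True by simp
      show ?thesis unfolding g2 by (simp add: swap_entries_def g1)
    next
      case False
      have r: "F j x \<in> {1..card (A j)}" using SET_range[of "F j" "A j" x] F j by simp
      have "F j x + off j \<noteq> w + off i \<and> F j x + off j \<noteq> Suc (w + off i)"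
      proof (cases "j < i")
        case True
        have "off j + card (A j) \<le> off i" using off_lt[of j i] True j by simp
        moreover have "F j x \<le> card (A j)" using r by simp
        ultimately show ?thesis using w by linarith
      next
        case False then have "i < j" using \<open>j \<noteq> i\<close> by simp
        then have "off i + card (A i) \<le> off j" using off_lt[of i j] i by simp
        moreover have "1 \<le> F j x" using r by simp
        ultimately show ?thesis using w by linarith
      qed
      moreover have g1: "glue F x = F j x + off j" using glue_A[OF j] by simp
      moreover have g2: "glue (F(i := swap_entries w (F i))) x = F j x + off j"
        using glue_A[OF j, of "F(i := swap_entries w (F i))"] False by simp
      ultimately show ?thesis by (simp add: swap_entries_def)
    qed
  qed
qed

lemma lift_step:
  assumes F: "\<forall>j\<in>{1..k}. F j \<in> SET (A j)" and i: "i \<in> {1..k}" and st: "pi_step (A i) y z"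
  shows "pi_step D (glue (F(i:=y))) (glue (F(i:=z)))"
proof -
  have y: "y \<in> SET (A i)" using st unfolding pi_step_def by blast
  obtain w where w: "1 \<le> w" "w < card (A i)" "pi_op (A i) w y = Some z" using st unfolding pi_step_def by blast
  define G where "G = F(i:=y)"
  have G: "\<forall>j\<in>{1..k}. G j \<in> SET (A j)" using F y unfolding G_def by simp
  have GS: "glue G \<in> SET D" using glue_SET[OF G] .
  obtain c where c: "c \<in> A i" "y c = w" using SET_surj[OF y, of w] w by auto
  obtain c' where c': "c' \<in> A i" "y c' = Suc w" using SET_surj[OF y, of "Suc w"] w by auto
  have gc: "glue G c = w + off i" "glue G c' = Suc (w + off i)" using glue_A[OF i] c c' unfolding G_def by auto
  have cD: "c \<in> D" "c' \<in> D" using A_sub[OF i] c c' by auto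
  have rD: "row_of D (glue G) (w + off i) = fst c" "row_of D (glue G) (Suc (w + off i)) = fst c'"
    using row_of_eq[OF SET_inj[OF GS]] cD gc by auto
  have rA: "row_of (A i) y w = fst c" "row_of (A i) y (Suc w) = fst c'"
    using row_of_eq[OF SET_inj[OF y]] c c' by auto
  have v: "1 \<le> w + off i" "w + off i < card D" using w off_le_D[OF i] by auto
  have pi: "pi_op D (w + off i) (glue G) = Some (glue (F(i:=z)))"
  proof (cases "fst c < fst c'")
    case True
    then have "z = y" using w(3) rA unfolding pi_op_def by simp
    then show ?thesis using True rD unfolding pi_op_def G_def by simp
  next
    case False
    then have lt: "fst c' < fst c" using w(3) rA unfolding pi_op_def by (auto split: if_splits)
    then have "z = swap_entries w y" using w(3) rA unfolding pi_op_def by auto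
    moreover have "swap_entries (w + off i) (glue G) = glue (G(i := swap_entries w (G i)))"
      using swap_glue[OF G i w(1,2)] .
    ultimately show ?thesis using lt rD unfolding pi_op_def G_def by simp
  qed
  have "pi_step D (glue G) (glue (F(i:=z)))" unfolding pi_step_def using GS v pi by blast
  then show ?thesis unfolding G_def .
qed

lemma lift_star:
  assumes F: "\<forall>j\<in>{1..k}. F j \<in> SET (A j)" and i: "i \<in> {1..k}"
    and st: "(pi_step (A i))\<^sup>*\<^sup>* y z"
  shows "(pi_step D)\<^sup>*\<^sup>* (glue (F(i:=y))) (glue (F(i:=z)))"
  using st
proof (induction rule: rtranclp_induct)
  case base then show ?case by simp
next
  case (step u z)
  have "pi_step D (glue (F(i:=u))) (glue (F(i:=z)))" using lift_step[OF F i step.hyps(2)] .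
  with step.IH show ?case by (meson rtranclp.rtrancl_into_rtrancl)
qed

end

locale sk2 = sk +
  fixes M :: "nat \<Rightarrow> cell \<Rightarrow> nat"
  assumes minM: "\<forall>i\<in>{1..k}. minimal_elements (A i) = {M i}"
begin

lemma M_in: "i \<in> {1..k} \<Longrightarrow> M i \<in> minimal_elements (A i)"
  using minM by simp

lemma M_SET: "i \<in> {1..k} \<Longrightarrow> M i \<in> SET (A i)"
  using M_in unfolding minimal_elements_def by blast

lemma M_min: "i \<in> {1..k} \<Longrightarrow> S \<in> SET (A i) \<Longrightarrow> set_le (A i) S (M i) \<Longrightarrow> S = M i"
  using M_in unfolding minimal_elements_def by blast

lemma min_unique: "i \<in> {1..k} \<Longrightarrow> S \<in> SET (A i) \<Longrightarrow> S \<noteq> M i \<Longrightarrow> \<exists>S'\<in>SET (A i). set_le (A i) S' S \<and> S' \<noteq> S"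
proof -
  assume h: "i \<in> {1..k}" "S \<in> SET (A i)" "S \<noteq> M i"
  then have "S \<notin> minimal_elements (A i)" using minM by simp
  then show ?thesis using h unfolding minimal_elements_def by blast
qed

lemma T0_SET: "glue M \<in> SET D" using glue_SET M_SET by blast

lemma min_is_T0:
  assumes T: "T \<in> minimal_elements D" shows "T = glue M"
proof -
  have TS: "T \<in> SET D" and nomin: "\<And>T'. T' \<in> SET D \<Longrightarrow> set_le D T' T \<Longrightarrow> T' = T"
    using T unfolding minimal_elements_def by auto
  have blk: "block T"
  proof (rule block_of_nodesc[OF TS])
    fix c c' assume h: "c \<in> D" "c' \<in> D" "T c' = Suc (T c)"
    show "comp c \<le> comp c'"
    proof (rule ccontr)
      assume "\<not> comp c \<le> comp c'"
      then have lt: "comp c' < comp c" by simp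
      have a: "comp c \<in> {1..k}" "c \<in> A (comp c)" using comp_D h by auto
      have b: "comp c' \<in> {1..k}" "c' \<in> A (comp c')" using comp_D h by auto
      have r: "fst c < fst c'" using below[of "comp c'" "comp c" c' c] a b lt by auto
      have s: "snd c \<noteq> snd c'" using diff_col[OF a(1) b(1) _ a(2) b(2)] lt by simp
      define v where "v = T c"
      define T' where "T' = swap_entries v T"
      have T'S: "T' \<in> SET D" unfolding T'_def
        using swap_SET[OF TS h(1) v_def[symmetric] h(2)] h(3) r s v_def by auto
      have t': "T' c = Suc v" "T' c' = v" unfolding T'_def swap_entries_def using h(3) v_def by auto
      have rr: "row_of D T' (Suc v) = fst c" "row_of D T' v = fst c'"
        using row_of_eq[OF SET_inj[OF T'S]] h t' by auto
      have vr: "1 \<le> v" "v < card D" using SET_range[OF TS h(1)] SET_range[OF TS h(2)] h(3) v_def by auto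
      have "pi_op D v T' = Some T" unfolding pi_op_def using rr r swap_inv[of v T] T'_def by simp
      then have "pi_step D T' T" unfolding pi_step_def using T'S vr by blast
      then have "set_le D T' T" unfolding set_le_def using T'S by blast
      then have "T' = T" using nomin T'S by blast
      moreover have "T' c \<noteq> T c" using t' v_def by simp
      ultimately show False by simp
    qed
  qed
  have resM: "res i T = M i" if i: "i \<in> {1..k}" for i
  proof (rule ccontr)
    assume ne: "res i T \<noteq> M i"
    have RS: "res i T \<in> SET (A i)" using res_SET[OF TS blk i] .
    obtain S' where S': "S' \<in> SET (A i)" "set_le (A i) S' (res i T)" "S' \<noteq> res i T"
      using min_unique[OF i RS ne] by blast
    define F where "F = (\<lambda>j. res j T)"
    have F: "\<forall>j\<in>{1..k}. F j \<in> SET (A j)" using res_SET[OF TS blk] F_def by blast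
    have F': "\<forall>j\<in>{1..k}. (F(i:=S')) j \<in> SET (A j)" using F S'(1) by auto
    have "(pi_step D)\<^sup>*\<^sup>* (glue (F(i:=S'))) (glue (F(i:=res i T)))"
      using lift_star[OF F i] S' unfolding set_le_def by blast
    moreover have "F(i := res i T) = F" unfolding F_def by auto
    moreover have "glue F = T" using glue_res[OF TS blk] F_def by simp
    ultimately have st: "(pi_step D)\<^sup>*\<^sup>* (glue (F(i:=S'))) T" by simp
    have GS: "glue (F(i:=S')) \<in> SET D" using glue_SET[OF F'] .
    then have "glue (F(i:=S')) = T" using nomin st unfolding set_le_def by blast
    then have "res i (glue (F(i:=S'))) = res i T" by simp
    moreover have "res i (glue (F(i:=S'))) = S'" using res_glue[of "F(i:=S')" i] S' i by simp
    ultimately show False using S' by simp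
  qed
  have "T = glue (\<lambda>i. res i T)" using glue_res[OF TS blk] by simp
  also have "\<dots> = glue M" using resM by (intro glue_cong) simp
  finally show ?thesis .
qed

lemma T0_min: "glue M \<in> minimal_elements D"
proof -
  have T0S: "glue M \<in> SET D" by (rule T0_SET)
  have "T' = glue M" if T': "T' \<in> SET D" "set_le D T' (glue M)" for T'
  proof (rule ccontr)
    assume ne: "T' \<noteq> glue M"
    obtain S where S: "pi_step D S (glue M)" "S \<noteq> glue M"
      using last_step[of "pi_step D" T' "glue M"] T'(2) ne unfolding set_le_def by blast
    have SS: "S \<in> SET D" using S unfolding pi_step_def by blast
    obtain v where v: "1 \<le> v" "v < card D" "pi_op D v S = Some (glue M)" using S unfolding pi_step_def by blast
    obtain c where c: "c \<in> D" "glue M c = v" using SET_surj[OF T0S, of v] v by auto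
    obtain c' where c': "c' \<in> D" "glue M c' = Suc v" using SET_surj[OF T0S, of "Suc v"] v by auto
    have notfirst: "\<not> row_of D S (Suc v) > row_of D S v" using v(3) S(2) unfolding pi_op_def by auto
    then have sw: "glue M = swap_entries v S" and rl: "row_of D S (Suc v) < row_of D S v"
      using v(3) unfolding pi_op_def by (auto split: if_splits)
    have Sw: "S = swap_entries v (glue M)" using sw swap_inv by metis
    have sc: "S c = Suc v" "S c' = v" using Sw c c' unfolding swap_entries_def by auto
    have "row_of D S (Suc v) = fst c" "row_of D S v = fst c'" using row_of_eq[OF SET_inj[OF SS]] c c' sc by auto
    with rl have r: "fst c < fst c'" by simp
    define a where "a = comp c"
    define b where "b = comp c'"
    have a: "a \<in> {1..k}" "c \<in> A a" using comp_D c a_def by auto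
    have b: "b \<in> {1..k}" "c' \<in> A b" using comp_D c' b_def by auto
    have va: "M a c + off a = v" using glue_A[OF a] c by simp
    have vb: "M b c' + off b = Suc v" using glue_A[OF b] c' by simp
    have ab: "a = b"
    proof (rule ccontr)
      assume "a \<noteq> b"
      then consider "a < b" | "b < a" by linarith
      then show False
      proof cases
        case 1 then show False using below[of a b c c'] a b r by auto
      next
        case 2
        have "M b c' \<le> card (A b)" using SET_range[OF M_SET[OF b(1)] b(2)] by simp
        moreover have "1 \<le> M a c" using SET_range[OF M_SET[OF a(1)] a(2)] by simp
        ultimately show False using off_lt[of b a] 2 va vb b by auto
      qed
    qed
    define w where "w = M a c"
    have Mc: "M a c = w" "M a c' = Suc w" using va vb ab w_def by auto
    have sne: "snd c \<noteq> snd c'"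
    proof
      assume e: "snd c = snd c'"
      have e2: "(fst c', snd c) = c'" using e by (metis prod.collapse)
      have "S (fst c, snd c) < S (fst c', snd c)"
        by (rule SET_col[OF SS]) (simp_all add: e2 c(1) c'(1) r)
      then show False using sc by (simp add: e2)
    qed
    define Si where "Si = swap_entries w (M a)"
    have caa: "c' \<in> A a" using b ab by simp
    have SiS: "Si \<in> SET (A a)" unfolding Si_def
      using swap_SET[OF M_SET[OF a(1)] a(2) Mc(1) caa Mc(2)] r sne by auto
    have Sic: "Si c = Suc w" "Si c' = w" unfolding Si_def swap_entries_def using Mc by auto
    have "row_of (A a) Si (Suc w) = fst c" "row_of (A a) Si w = fst c'"
      using row_of_eq[OF SET_inj[OF SiS]] a(2) caa Sic by auto
    then have "pi_op (A a) w Si = Some (M a)" unfolding pi_op_def using r swap_inv[of w "M a"] Si_def by simp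
    moreover have "1 \<le> w" "w < card (A a)"
      using SET_range[OF M_SET[OF a(1)] a(2)] SET_range[OF M_SET[OF a(1)] caa] Mc by auto
    ultimately have "pi_step (A a) Si (M a)" unfolding pi_step_def using SiS by blast
    then have "set_le (A a) Si (M a)" unfolding set_le_def using SiS by blast
    then have "Si = M a" using M_min[OF a(1) SiS] by blast
    then show False using Sic Mc by simp
  qed
  then show ?thesis unfolding minimal_elements_def using T0S by blast
qed

end


theorem proposition5p1:
  fixes \<alpha> \<beta> :: "nat list" and k :: nat and A :: "nat \<Rightarrow> cell set"
    and M :: "nat \<Rightarrow> cell \<Rightarrow> nat"
  assumes "is_composition \<alpha>" and "is_composition \<beta>" and "comp_contained \<beta> \<alpha>"
    and "disjoint_sum (skew_diagram \<alpha> \<beta>) k A"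
    and "\<forall>i. 1 \<le> i \<and> i < k \<longrightarrow> (\<forall>c\<in>A i. \<forall>c'\<in>A (Suc i). fst c' < fst c)"
    and "\<forall>i\<in>{1..k}. minimal_elements (A i) = {M i}"
  shows "\<exists>T. minimal_elements (skew_diagram \<alpha> \<beta>) = {T} \<and>
           (\<forall>i\<in>{1..k}. \<forall>c\<in>A i. T c = M i c + (\<Sum>j\<in>{1..<i}. card (A j)))"
proof -
  have finD: "finite (skew_diagram \<alpha> \<beta>)"
  proof -
    have "skew_diagram \<alpha> \<beta> \<subseteq> Sigma {1..length \<alpha>} (\<lambda>r. {..part \<alpha> r})"
      unfolding skew_diagram_def by auto
    moreover have "finite (Sigma {1..length \<alpha>} (\<lambda>r. {..part \<alpha> r}))" by (intro finite_SigmaI) auto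
    ultimately show ?thesis using finite_subset by blast
  qed
  have "sk2 (skew_diagram \<alpha> \<beta>) k A M"
    unfolding sk2_def sk_def sk2_axioms_def using finD assms(4,5,6) by blast
  then interpret sk2 "skew_diagram \<alpha> \<beta>" k A M .
  show ?thesis
  proof (intro exI conjI)
    show "minimal_elements (skew_diagram \<alpha> \<beta>) = {glue M}" using T0_min min_is_T0 by blast
    show "\<forall>i\<in>{1..k}. \<forall>c\<in>A i. glue M c = M i c + (\<Sum>j\<in>{1..<i}. card (A j))"
      using glue_A unfolding off_def by blast
  qed
qed

end
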